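(* Every group of prime order is DRR-detecting (and therefore GRR-detecting).
   Context: For a group $R$ and $S\subseteq R$, the Cayley digraph $\mathrm{Cay}(R,S)$ has vertex set $R$ and an arc from $r$ to $sr$ whenever $s\in S$. It is a DRR if $\mathrm{Aut}(\mathrm{Cay}(R,S))$ equals the right regular representation $\hat R$, and a GRR if additionally $S=S^{-1}$. $\mathrm{Aut}(R)_S$ is the group of automorphisms of $R$ fixing $S$ setwise. $R$ is DRR-detecting if for every $S\subseteq R$, $\mathrm{Aut}(R)_S=1$ implies $\mathrm{Cay}(R,S)$ is a DRR; GRR-detecting if for every $S\subseteq R$ with $S=S^{-1}$, $\mathrm{Aut}(R)_S=1$ implies $\mathrm{Cay}(R,S)$ is a GRR. *)

theory Defs
  imports "HOL-Algebra.Group" "HOL-Computational_Algebra.Primes"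
begin

definition cay_arcs :: "('a, 'b) monoid_scheme \<Rightarrow> 'a set \<Rightarrow> ('a \<times> 'a) set" where
  "cay_arcs G S = {(r, s \<otimes>\<^bsub>G\<^esub> r) | r s. r \<in> carrier G \<and> s \<in> S}"

definition cay_aut :: "('a, 'b) monoid_scheme \<Rightarrow> 'a set \<Rightarrow> ('a \<Rightarrow> 'a) set" where
  "cay_aut G S = {\<sigma>. \<sigma> \<in> extensional (carrier G) \<and>
      bij_betw \<sigma> (carrier G) (carrier G) \<and>
      (\<forall>x\<in>carrier G. \<forall>y\<in>carrier G.
         (x, y) \<in> cay_arcs G S \<longleftrightarrow> (\<sigma> x, \<sigma> y) \<in> cay_arcs G S)}"

definition right_regular :: "('a, 'b) monoid_scheme \<Rightarrow> ('a \<Rightarrow> 'a) set" where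
  "right_regular G = {(\<lambda>x\<in>carrier G. x \<otimes>\<^bsub>G\<^esub> g) | g. g \<in> carrier G}"

definition is_DRR :: "('a, 'b) monoid_scheme \<Rightarrow> 'a set \<Rightarrow> bool" where
  "is_DRR G S \<longleftrightarrow> cay_aut G S = right_regular G"

definition is_GRR :: "('a, 'b) monoid_scheme \<Rightarrow> 'a set \<Rightarrow> bool" where
  "is_GRR G S \<longleftrightarrow> is_DRR G S \<and> (\<lambda>s. inv\<^bsub>G\<^esub> s) ` S = S"

definition aut_stab_trivial :: "('a, 'b) monoid_scheme \<Rightarrow> 'a set \<Rightarrow> bool" where
  "aut_stab_trivial G S \<longleftrightarrow>
     (\<forall>\<phi> \<in> iso G G. \<phi> ` S = S \<longrightarrow> (\<forall>x\<in>carrier G. \<phi> x = x))"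

definition DRR_detecting :: "('a, 'b) monoid_scheme \<Rightarrow> bool" where
  "DRR_detecting G \<longleftrightarrow>
     (\<forall>S. S \<subseteq> carrier G \<longrightarrow> aut_stab_trivial G S \<longrightarrow> is_DRR G S)"

definition GRR_detecting :: "('a, 'b) monoid_scheme \<Rightarrow> bool" where
  "GRR_detecting G \<longleftrightarrow>
     (\<forall>S. S \<subseteq> carrier G \<longrightarrow> (\<lambda>s. inv\<^bsub>G\<^esub> s) ` S = S \<longrightarrow>
        aut_stab_trivial G S \<longrightarrow> is_GRR G S)"

end

theory Submission
  imports Defs "HOL-Algebra.Multiplicative_Group" "HOL-Computational_Algebra.Polynomial"
begin


locale pgrp = group G for G (structure) +
  assumes prime_ord: "prime (Coset.order G)"
begin

lemma fin: "finite (carrier G)"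
  using prime_ord unfolding Coset.order_def by (metis card.infinite not_prime_0)

lemma ord_p: "y \<in> carrier G \<Longrightarrow> y \<noteq> \<one> \<Longrightarrow> ord y = Coset.order G"
proof -
  assume y: "y \<in> carrier G" "y \<noteq> \<one>"
  have "ord y dvd Coset.order G" using ord_dvd_group_order y by blast
  moreover have "ord y \<noteq> 1" using ord_eq_1 y by blast
  ultimately show ?thesis using prime_ord by (meson prime_nat_iff)
qed

lemma gen: assumes y: "y \<in> carrier G" "y \<noteq> \<one>" and x: "x \<in> carrier G"
  shows "\<exists>k<Coset.order G. x = y [^] (k::nat)"
proof -
  have inj: "inj_on (\<lambda>k::nat. y [^] k) {0..ord y - 1}" using ord_inj y by blast
  have p2: "Coset.order G \<ge> 2" using prime_ord prime_ge_2_nat by blast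
  have e: "{0..ord y - 1} = {..<Coset.order G}" using ord_p[OF y] p2 by auto
  have "card ((\<lambda>k::nat. y [^] k) ` {..<Coset.order G}) = Coset.order G"
    using inj unfolding e by (simp add: card_image)
  moreover have "(\<lambda>k::nat. y [^] k) ` {..<Coset.order G} \<subseteq> carrier G" using y by auto
  ultimately have "(\<lambda>k::nat. y [^] k) ` {..<Coset.order G} = carrier G"
    using fin card_subset_eq unfolding Coset.order_def by metis
  then have "x \<in> (\<lambda>k::nat. y [^] k) ` {..<Coset.order G}" using x by simp
  then obtain k where "k \<in> {..<Coset.order G}" "x = y [^] k" by (rule imageE)
  then show ?thesis by (intro exI[of _ k] conjI) simp_all
qed

lemma comm: assumes "x \<in> carrier G" "z \<in> carrier G" shows "x \<otimes> z = z \<otimes> x"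
proof (cases "x = \<one>")
  case True then show ?thesis using assms by simp
next
  case False
  obtain k::nat where "z = x [^] k" using gen[OF assms(1) False assms(2)] by (elim exE conjE)
  then show ?thesis using assms
    using nat_pow_Suc[of x k] nat_pow_Suc2[of x k] by simp
qed

lemma cgrp: "comm_group G"
  by (intro group_comm_groupI comm)

lemma exists_nonid: "\<exists>g\<in>carrier G. g \<noteq> \<one>"
proof (rule ccontr)
  assume a: "\<not> (\<exists>g\<in>carrier G. g \<noteq> \<one>)"
  have "carrier G = {\<one>}"
  proof
    show "carrier G \<subseteq> {\<one>}" using a by blast
    show "{\<one>} \<subseteq> carrier G" by simp
  qed
  then have "Coset.order G = 1" unfolding Coset.order_def by simp
  then show False using prime_ord by simp
qed

lemma pow_inj: assumes "\<not> Coset.order G dvd q" "x \<in> carrier G" "z \<in> carrier G" "x [^] q = z [^] q"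
  shows "x = z"
proof (rule ccontr)
  assume ne: "x \<noteq> z"
  have "(x \<otimes> inv z) [^] q = x [^] q \<otimes> inv (z [^] q)"
  proof -
    have "x \<otimes> inv z = inv z \<otimes> x" using assms by (intro comm) simp_all
    then show ?thesis using assms pow_mult_distrib[of x "inv z" q] nat_pow_inv[of z q] by simp
  qed
  also have "\<dots> = \<one>" using assms by simp
  finally have "ord (x \<otimes> inv z) dvd q" using pow_eq_id assms by simp
  moreover have "x \<otimes> inv z \<noteq> \<one>"
  proof
    assume h: "x \<otimes> inv z = \<one>"
    have "x = x \<otimes> inv z \<otimes> z" using assms by (simp add: m_assoc)
    also have "\<dots> = z" using h assms by simp
    finally show False using ne by simp
  qed
  ultimately show False using ord_p[of "x \<otimes> inv z"] assms by simp
qed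

end


definition cnt :: "('a,'b) monoid_scheme \<Rightarrow> 'a \<Rightarrow> int poly \<Rightarrow> 'a \<Rightarrow> int" where
  "cnt G g P z = (\<Sum>k\<le>degree P. if g [^]\<^bsub>G\<^esub> (k::nat) = z then coeff P k else 0)"

lemma cnt_ext:
  assumes "degree P \<le> N"
  shows "cnt G g P z = (\<Sum>k\<le>N. if g [^]\<^bsub>G\<^esub> (k::nat) = z then coeff P k else 0)"
  unfolding cnt_def
proof (rule sum.mono_neutral_left)
  show "finite {..N}" by simp
  show "{..degree P} \<subseteq> {..N}" using assms by auto
  show "\<forall>i\<in>{..N} - {..degree P}. (if g [^]\<^bsub>G\<^esub> i = z then coeff P i else 0) = 0"
    by (simp add: coeff_eq_0)
qed

lemma cnt_add: "cnt G g (P + Q) z = cnt G g P z + cnt G g Q z"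
proof -
  define N where "N = max (degree P) (degree Q)"
  have "degree (P + Q) \<le> N" unfolding N_def by (rule degree_add_le_max)
  then have "cnt G g (P + Q) z = (\<Sum>k\<le>N. if g [^]\<^bsub>G\<^esub> (k::nat) = z then coeff (P + Q) k else 0)"
    by (rule cnt_ext)
  also have "\<dots> = (\<Sum>k\<le>N. (if g [^]\<^bsub>G\<^esub> (k::nat) = z then coeff P k else 0)
                   + (if g [^]\<^bsub>G\<^esub> (k::nat) = z then coeff Q k else 0))"
    by (intro sum.cong) auto
  also have "\<dots> = (\<Sum>k\<le>N. (if g [^]\<^bsub>G\<^esub> (k::nat) = z then coeff P k else 0))
                   + (\<Sum>k\<le>N. (if g [^]\<^bsub>G\<^esub> (k::nat) = z then coeff Q k else 0))"
    by (rule sum.distrib)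
  also have "\<dots> = cnt G g P z + cnt G g Q z"
    by (simp only: cnt_ext[of P N] cnt_ext[of Q N] N_def max.cobounded1 max.cobounded2)
  finally show ?thesis .
qed

lemma cnt_zero: "cnt G g 0 z = 0"
  unfolding cnt_def by (simp cong: if_cong)

lemma cnt_sum: "cnt G g (\<Sum>i\<in>I. f i) z = (\<Sum>i\<in>I. cnt G g (f i) z)"
proof (induction I rule: infinite_finite_induct)
  case (infinite A) then show ?case by (simp add: cnt_zero)
next
  case empty then show ?case by (simp add: cnt_zero)
next
  case (insert x F) then show ?case by (simp add: cnt_add)
qed

lemma cnt_smult: "cnt G g (smult c P) z = c * cnt G g P z"
proof -
  have "cnt G g (smult c P) z = (\<Sum>k\<le>degree P. if g [^]\<^bsub>G\<^esub> (k::nat) = z then coeff (smult c P) k else 0)"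
    by (rule cnt_ext) (rule degree_smult_le)
  also have "\<dots> = c * cnt G g P z"
    unfolding cnt_def sum_distrib_left by (intro sum.cong) auto
  finally show ?thesis .
qed

lemma cnt_monom: "cnt G g (monom 1 j) z = (if g [^]\<^bsub>G\<^esub> (j::nat) = z then 1 else 0)"
proof -
  have "cnt G g (monom 1 j) z = (\<Sum>k\<le>j. if g [^]\<^bsub>G\<^esub> (k::nat) = z then coeff (monom 1 j) k else 0)"
    by (rule cnt_ext) (simp add: degree_monom_le)
  also have "\<dots> = (\<Sum>k\<in>{j}. if g [^]\<^bsub>G\<^esub> (k::nat) = z then coeff (monom 1 j) k else 0)"
    by (rule sum.mono_neutral_right) (auto simp: coeff_monom)
  finally show ?thesis by (simp add: coeff_monom)
qed

context pgrp
begin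

lemma cnt_pCons0:
  assumes g: "g \<in> carrier G" and z: "z \<in> carrier G"
  shows "cnt G g (pCons 0 P) z = cnt G g P (z \<otimes> inv g)"
proof -
  have "cnt G g (pCons 0 P) z = (\<Sum>k\<le>Suc (degree P). if g [^] (k::nat) = z then coeff (pCons 0 P) k else 0)"
    by (rule cnt_ext) (simp add: degree_pCons_le)
  also have "\<dots> = (\<Sum>k\<le>degree P. if g [^] (Suc k) = z then coeff P k else 0)"
    by (subst sum.atMost_Suc_shift) (simp del: nat_pow_Suc2 nat_pow_Suc add: coeff_pCons_Suc cong: if_cong)
  also have "\<dots> = cnt G g P (z \<otimes> inv g)"
    unfolding cnt_def
  proof (intro sum.cong refl)
    fix k assume "k \<in> {..degree P}"
    have "(g [^] (Suc k) = z) = (g [^] k = z \<otimes> inv g)"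
    proof
      assume "g [^] Suc k = z"
      then have "g [^] k \<otimes> g = z" by (simp add: nat_pow_Suc)
      then have "g [^] k \<otimes> g \<otimes> inv g = z \<otimes> inv g" by simp
      then show "g [^] k = z \<otimes> inv g" using g z by (simp add: m_assoc)
    next
      assume h: "g [^] k = z \<otimes> inv g"
      have "g [^] Suc k = g [^] k \<otimes> g" by (simp add: nat_pow_Suc)
      also have "\<dots> = z" using h g z by (simp add: m_assoc)
      finally show "g [^] Suc k = z" .
    qed
    then show "(if g [^] (Suc k) = z then coeff P k else 0) = (if g [^] k = z \<otimes> inv g then coeff P k else 0)"
      by simp
  qed
  finally show ?thesis .
qed

lemma cnt_monom_mult:
  assumes g: "g \<in> carrier G" and z: "z \<in> carrier G"
  shows "cnt G g (monom 1 j * P) z = cnt G g P (z \<otimes> inv (g [^] (j::nat)))"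
  using z
proof (induction j arbitrary: z)
  case 0 then show ?case by simp
next
  case (Suc j)
  have "monom 1 (Suc j) * P = pCons 0 (monom 1 j * P)"
    by (simp add: monom_Suc)
  then have "cnt G g (monom 1 (Suc j) * P) z = cnt G g (monom 1 j * P) (z \<otimes> inv g)"
    using cnt_pCons0 g Suc.prems by simp
  also have "\<dots> = cnt G g P (z \<otimes> inv g \<otimes> inv (g [^] j))"
    using Suc.IH g Suc.prems by simp
  also have "z \<otimes> inv g \<otimes> inv (g [^] j) = z \<otimes> inv (g [^] Suc j)"
    using g Suc.prems by (simp add: m_assoc nat_pow_Suc inv_mult_group)
  finally show ?case .
qed

end

lemma fresh:
  fixes x y :: "'a::comm_ring_1"
  assumes q: "prime q"
  shows "of_nat q dvd ((x + y) ^ q - (x ^ q + y ^ q))"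
proof -
  have q0: "q > 0" using q prime_gt_0_nat by blast
  have "(x + y) ^ q = (\<Sum>k\<le>q. of_nat (q choose k) * x ^ k * y ^ (q - k))"
    by (rule binomial_ring)
  also have "\<dots> = (\<Sum>k\<in>{0,q}. of_nat (q choose k) * x ^ k * y ^ (q - k))
      + (\<Sum>k\<in>{..q} - {0,q}. of_nat (q choose k) * x ^ k * y ^ (q - k))"
    by (subst sum.subset_diff[of "{0,q}"]) (auto simp: add.commute)
  also have "(\<Sum>k\<in>{0,q}. of_nat (q choose k) * x ^ k * y ^ (q - k)) = x ^ q + y ^ q"
    using q0 by (simp add: add.commute)
  finally have eq: "(x + y) ^ q - (x ^ q + y ^ q) = (\<Sum>k\<in>{..q} - {0,q}. of_nat (q choose k) * x ^ k * y ^ (q - k))"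
    by simp
  have "of_nat q dvd (\<Sum>k\<in>{..q} - {0,q}. of_nat (q choose k) * x ^ k * y ^ (q - k))"
  proof (rule dvd_sum)
    fix k assume k: "k \<in> {..q} - {0,q}"
    then have "q dvd (q choose k)" using q by (intro dvd_choose_prime) auto
    then obtain c where "q choose k = q * c" by (elim dvdE)
    then show "of_nat q dvd of_nat (q choose k) * x ^ k * y ^ (q - k)"
      by (simp add: mult.assoc)
  qed
  then show ?thesis using eq by simp
qed

lemma fresh_sum:
  fixes f :: "'b \<Rightarrow> 'a::comm_ring_1"
  assumes q: "prime q"
  shows "of_nat q dvd ((\<Sum>i\<in>I. f i) ^ q - (\<Sum>i\<in>I. f i ^ q))"
proof (induction I rule: infinite_finite_induct)
  case (infinite A) then show ?case using q prime_gt_0_nat by (simp add: power_0_left)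
next
  case empty then show ?case using q prime_gt_0_nat by (simp add: power_0_left)
next
  case (insert x F)
  have e: "(\<Sum>i\<in>insert x F. f i) ^ q - (\<Sum>i\<in>insert x F. f i ^ q)
     = ((f x + (\<Sum>i\<in>F. f i)) ^ q - (f x ^ q + (\<Sum>i\<in>F. f i) ^ q))
       + ((\<Sum>i\<in>F. f i) ^ q - (\<Sum>i\<in>F. f i ^ q))"
    using insert by simp
  show ?case unfolding e using fresh[OF q] insert.IH by (rule dvd_add)
qed



definition good :: "('a,'b) monoid_scheme \<Rightarrow> 'a set \<Rightarrow> 'a set \<Rightarrow> bool" where
  "good G S X \<longleftrightarrow> X \<subseteq> carrier G \<and> (\<forall>\<sigma>\<in>cay_aut G S. \<forall>a\<in>carrier G. \<forall>b\<in>carrier G.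
      (b \<otimes>\<^bsub>G\<^esub> inv\<^bsub>G\<^esub> a \<in> X) = (\<sigma> b \<otimes>\<^bsub>G\<^esub> inv\<^bsub>G\<^esub> (\<sigma> a) \<in> X))"

fun wk :: "('a,'b) monoid_scheme \<Rightarrow> 'a set \<Rightarrow> nat \<Rightarrow> 'a \<Rightarrow> 'a \<Rightarrow> nat" where
  "wk G X 0 u v = (if u = v then 1 else 0)"
| "wk G X (Suc n) u v = (\<Sum>w\<in>{w\<in>carrier G. v \<otimes>\<^bsub>G\<^esub> inv\<^bsub>G\<^esub> w \<in> X}. wk G X n u w)"

context pgrp
begin

lemma wk_inv:
  assumes bij: "bij_betw \<sigma> (carrier G) (carrier G)"
    and rel: "\<And>a b. a \<in> carrier G \<Longrightarrow> b \<in> carrier G \<Longrightarrow> (b \<otimes> inv a \<in> X) = (\<sigma> b \<otimes> inv (\<sigma> a) \<in> X)"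
    and u: "u \<in> carrier G" and v: "v \<in> carrier G"
  shows "wk G X n (\<sigma> u) (\<sigma> v) = wk G X n u v"
  using v
proof (induction n arbitrary: v)
  case 0
  have "inj_on \<sigma> (carrier G)" using bij by (simp add: bij_betw_def)
  then have "(\<sigma> u = \<sigma> v) = (u = v)" using u 0 by (meson inj_on_contraD)
  then show ?case by simp
next
  case (Suc n)
  let ?A = "{w \<in> carrier G. v \<otimes> inv w \<in> X}"
  have inj: "inj_on \<sigma> (carrier G)" using bij by (simp add: bij_betw_def)
  have im: "\<sigma> ` carrier G = carrier G" using bij by (simp add: bij_betw_def)
  have img: "{w \<in> carrier G. \<sigma> v \<otimes> inv w \<in> X} = \<sigma> ` ?A"
  proof
    show "\<sigma> ` ?A \<subseteq> {w \<in> carrier G. \<sigma> v \<otimes> inv w \<in> X}"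
    proof
      fix w assume "w \<in> \<sigma> ` ?A"
      then obtain w' where w': "w' \<in> carrier G" "v \<otimes> inv w' \<in> X" "w = \<sigma> w'" by blast
      have "\<sigma> w' \<in> carrier G" using im w'(1) by blast
      moreover have "\<sigma> v \<otimes> inv (\<sigma> w') \<in> X" using rel[OF w'(1) Suc.prems] w'(2) by simp
      ultimately show "w \<in> {w \<in> carrier G. \<sigma> v \<otimes> inv w \<in> X}" using w'(3) by simp
    qed
    show "{w \<in> carrier G. \<sigma> v \<otimes> inv w \<in> X} \<subseteq> \<sigma> ` ?A"
    proof
      fix w assume w: "w \<in> {w \<in> carrier G. \<sigma> v \<otimes> inv w \<in> X}"
      then have "w \<in> \<sigma> ` carrier G" using im by simp
      then obtain w' where w': "w' \<in> carrier G" "w = \<sigma> w'" by blast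
      have "v \<otimes> inv w' \<in> X" using rel[OF w'(1) Suc.prems] w w'(2) by simp
      then show "w \<in> \<sigma> ` ?A" using w' by blast
    qed
  qed
  have injA: "inj_on \<sigma> ?A" using inj by (rule inj_on_subset) blast
  have "wk G X (Suc n) (\<sigma> u) (\<sigma> v) = (\<Sum>w\<in>\<sigma> ` ?A. wk G X n (\<sigma> u) w)"
    by (simp only: wk.simps img)
  also have "\<dots> = (\<Sum>w\<in>?A. wk G X n (\<sigma> u) (\<sigma> w))"
    using injA by (simp add: sum.reindex)
  also have "\<dots> = (\<Sum>w\<in>?A. wk G X n u w)"
    using Suc.IH by (intro sum.cong) auto
  also have "\<dots> = wk G X (Suc n) u v" by simp
  finally show ?case .
qed

lemma rmult_bij: "a \<in> carrier G \<Longrightarrow> bij_betw (\<lambda>x. x \<otimes> a) (carrier G) (carrier G)"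
  by (rule bij_betw_byWitness[where f'="\<lambda>x. x \<otimes> inv a"]) (auto simp: m_assoc)

lemma div_transl:
  assumes "a \<in> carrier G" "x \<in> carrier G" "y \<in> carrier G"
  shows "(y \<otimes> a) \<otimes> inv (x \<otimes> a) = y \<otimes> inv x"
proof -
  have "a \<otimes> (inv a \<otimes> inv x) = (a \<otimes> inv a) \<otimes> inv x"
    using assms by (intro m_assoc[symmetric]) simp_all
  also have "\<dots> = inv x" using assms by simp
  finally have e: "a \<otimes> (inv a \<otimes> inv x) = inv x" .
  have "(y \<otimes> a) \<otimes> inv (x \<otimes> a) = y \<otimes> (a \<otimes> (inv a \<otimes> inv x))"
    using assms by (simp add: inv_mult_group m_assoc)
  then show ?thesis using e by simp
qed

lemma wk_transl:
  assumes a: "a \<in> carrier G" and b: "b \<in> carrier G"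
  shows "wk G X n a b = wk G X n \<one> (b \<otimes> inv a)"
proof -
  have "wk G X n ((\<lambda>x. x \<otimes> inv a) a) ((\<lambda>x. x \<otimes> inv a) b) = wk G X n a b"
  proof (rule wk_inv)
    show "bij_betw (\<lambda>x. x \<otimes> inv a) (carrier G) (carrier G)" using a by (simp add: rmult_bij)
    fix x y assume "x \<in> carrier G" "y \<in> carrier G"
    then show "(y \<otimes> inv x \<in> X) = ((y \<otimes> inv a) \<otimes> inv (x \<otimes> inv a) \<in> X)"
      using a div_transl[of "inv a" x y] by simp
  qed (use a b in auto)
  then show ?thesis using a by simp
qed

lemma arcs_iff:
  assumes "S \<subseteq> carrier G" "x \<in> carrier G" "y \<in> carrier G"
  shows "((x, y) \<in> cay_arcs G S) = (y \<otimes> inv x \<in> S)"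
proof
  assume "(x, y) \<in> cay_arcs G S"
  then obtain s where s: "s \<in> S" "y = s \<otimes> x" unfolding cay_arcs_def by blast
  then have "y \<otimes> inv x = s" using assms by (simp add: m_assoc subsetD)
  then show "y \<otimes> inv x \<in> S" using s by simp
next
  assume h: "y \<otimes> inv x \<in> S"
  have "y = (y \<otimes> inv x) \<otimes> x" using assms by (simp add: m_assoc)
  then show "(x, y) \<in> cay_arcs G S" unfolding cay_arcs_def using h assms by blast
qed

lemma aut_bij: "\<sigma> \<in> cay_aut G S \<Longrightarrow> bij_betw \<sigma> (carrier G) (carrier G)"
  by (simp add: cay_aut_def)

lemma aut_closed: "\<sigma> \<in> cay_aut G S \<Longrightarrow> x \<in> carrier G \<Longrightarrow> \<sigma> x \<in> carrier G"
  using aut_bij bij_betwE by blast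

lemma good_S: "S \<subseteq> carrier G \<Longrightarrow> good G S S"
  unfolding good_def
proof (intro conjI ballI)
  fix \<sigma> a b assume S: "S \<subseteq> carrier G" and \<sigma>: "\<sigma> \<in> cay_aut G S" and a: "a \<in> carrier G" and b: "b \<in> carrier G"
  have "((a, b) \<in> cay_arcs G S) = ((\<sigma> a, \<sigma> b) \<in> cay_arcs G S)"
    using \<sigma> a b unfolding cay_aut_def by blast
  then show "(b \<otimes> inv a \<in> S) = (\<sigma> b \<otimes> inv (\<sigma> a) \<in> S)"
    using arcs_iff[OF S a b] arcs_iff[OF S aut_closed[OF \<sigma> a] aut_closed[OF \<sigma> b]] by simp
qed

lemma good_wk:
  assumes "good G S X" "\<sigma> \<in> cay_aut G S" "a \<in> carrier G" "b \<in> carrier G"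
  shows "wk G X n (\<sigma> a) (\<sigma> b) = wk G X n a b"
  by (rule wk_inv) (use assms aut_bij in \<open>auto simp: good_def\<close>)

lemma div_one: "x \<in> carrier G \<Longrightarrow> y \<in> carrier G \<Longrightarrow> (y \<otimes> inv x = \<one>) = (y = x)"
  by (metis inv_closed inv_equality inv_inv r_inv)

lemma good_empty: "good G S {}"
  by (simp add: good_def)

lemma good_one: "good G S {\<one>}"
  unfolding good_def
proof (intro conjI ballI)
  show "{\<one>} \<subseteq> carrier G" by simp
  fix \<sigma> a b assume \<sigma>: "\<sigma> \<in> cay_aut G S" and a: "a \<in> carrier G" and b: "b \<in> carrier G"
  have inj: "inj_on \<sigma> (carrier G)" using aut_bij[OF \<sigma>] by (simp add: bij_betw_def)
  have "(\<sigma> b = \<sigma> a) = (b = a)" using inj a b by (meson inj_on_contraD)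
  then show "(b \<otimes> inv a \<in> {\<one>}) = (\<sigma> b \<otimes> inv (\<sigma> a) \<in> {\<one>})"
    using div_one[OF a b] div_one[OF aut_closed[OF \<sigma> a] aut_closed[OF \<sigma> b]] by simp
qed

lemma good_sub_one: "A \<subseteq> {\<one>} \<Longrightarrow> good G S A"
  using good_empty good_one by (metis subset_singletonD)

end


definition Kset :: "('a,'b) monoid_scheme \<Rightarrow> 'a \<Rightarrow> 'a set \<Rightarrow> nat set" where
  "Kset G g X = {k. k < Coset.order G \<and> g [^]\<^bsub>G\<^esub> k \<in> X}"

definition Fpoly :: "('a,'b) monoid_scheme \<Rightarrow> 'a \<Rightarrow> 'a set \<Rightarrow> int poly" where
  "Fpoly G g X = (\<Sum>k\<in>Kset G g X. monom 1 k)"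

context pgrp
begin

lemma pow_inj_on:
  assumes g: "g \<in> carrier G" "g \<noteq> \<one>"
  shows "inj_on (\<lambda>k::nat. g [^] k) {..<Coset.order G}"
proof -
  have inj: "inj_on (\<lambda>k::nat. g [^] k) {0..ord g - 1}" using ord_inj g by blast
  have p2: "Coset.order G \<ge> 2" using prime_ord prime_ge_2_nat by blast
  have e: "{0..ord g - 1} = {..<Coset.order G}" using ord_p[OF g] p2 by auto
  show ?thesis using inj unfolding e .
qed

lemma K_bij:
  assumes g: "g \<in> carrier G" "g \<noteq> \<one>" and X: "X \<subseteq> carrier G"
  shows "bij_betw (\<lambda>k. g [^] k) (Kset G g X) X"
  unfolding bij_betw_def
proof
  show "inj_on (\<lambda>k. g [^] k) (Kset G g X)"
    using pow_inj_on[OF g] by (rule inj_on_subset) (auto simp: Kset_def)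
  show "(\<lambda>k. g [^] k) ` Kset G g X = X"
  proof
    show "(\<lambda>k. g [^] k) ` Kset G g X \<subseteq> X" by (auto simp: Kset_def)
    show "X \<subseteq> (\<lambda>k. g [^] k) ` Kset G g X"
    proof
      fix x assume x: "x \<in> X"
      then obtain k where k: "k < Coset.order G" "x = g [^] k" using gen[OF g] X by blast
      then have "k \<in> Kset G g X" using x by (simp add: Kset_def)
      then show "x \<in> (\<lambda>k. g [^] k) ` Kset G g X" using k by blast
    qed
  qed
qed

lemma inv_div:
  assumes a: "a \<in> carrier G" and b: "b \<in> carrier G"
  shows "a \<otimes> inv (a \<otimes> inv b) = b"
proof -
  have "inv (a \<otimes> inv b) = b \<otimes> inv a" using a b by (simp add: inv_mult_group)
  then have "a \<otimes> inv (a \<otimes> inv b) = a \<otimes> (b \<otimes> inv a)" by simp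
  also have "\<dots> = (a \<otimes> b) \<otimes> inv a" using a b by (intro m_assoc[symmetric]) simp_all
  also have "\<dots> = (b \<otimes> a) \<otimes> inv a" using a b comm by simp
  also have "\<dots> = b \<otimes> (a \<otimes> inv a)" using a b by (intro m_assoc) simp_all
  also have "\<dots> = b" using a b by simp
  finally show ?thesis .
qed

lemma finK: "finite (Kset G g X)"
  unfolding Kset_def by simp

lemma wk_cnt:
  assumes g: "g \<in> carrier G" "g \<noteq> \<one>" and X: "X \<subseteq> carrier G" and z: "z \<in> carrier G"
  shows "int (wk G X n \<one> z) = cnt G g (Fpoly G g X ^ n) z"
  using z
proof (induction n arbitrary: z)
  case 0
  have "cnt G g (Fpoly G g X ^ 0) z = cnt G g (monom 1 0) z" by simp
  also have "\<dots> = (if g [^] (0::nat) = z then 1 else 0)" by (rule cnt_monom)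
  also have "\<dots> = (if \<one> = z then 1 else 0)" by simp
  finally show ?case by simp
next
  case (Suc n)
  let ?A = "{w \<in> carrier G. z \<otimes> inv w \<in> X}"
  let ?h = "\<lambda>k. z \<otimes> inv (g [^] k)"
  have hb: "bij_betw ?h (Kset G g X) ?A"
    unfolding bij_betw_def
  proof
    show "inj_on ?h (Kset G g X)"
    proof (rule inj_onI)
      fix k k' assume k: "k \<in> Kset G g X" "k' \<in> Kset G g X" "?h k = ?h k'"
      then have "inv (g [^] k) = inv (g [^] k')" using Suc.prems g by simp
      then have "g [^] k = g [^] k'" using g by (metis inv_inv nat_pow_closed)
      then show "k = k'" using k pow_inj_on[OF g] by (auto simp: Kset_def inj_on_def)
    qed
    show "?h ` Kset G g X = ?A"
    proof
      show "?h ` Kset G g X \<subseteq> ?A"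
      proof
        fix w assume "w \<in> ?h ` Kset G g X"
        then obtain k where k: "k \<in> Kset G g X" "w = ?h k" by blast
        have "z \<otimes> inv w = g [^] k" using k Suc.prems g inv_div[of z "g [^] k"]
          by simp
        then show "w \<in> ?A" using k Suc.prems g by (simp add: Kset_def)
      qed
      show "?A \<subseteq> ?h ` Kset G g X"
      proof
        fix w assume w: "w \<in> ?A"
        then have xw: "z \<otimes> inv w \<in> X" "w \<in> carrier G" by auto
        then obtain k where k: "k < Coset.order G" "z \<otimes> inv w = g [^] k"
          using gen[OF g] X Suc.prems by (meson m_closed inv_closed subsetD)
        have kK: "k \<in> Kset G g X" using k xw by (simp add: Kset_def)
        have "?h k = z \<otimes> inv (z \<otimes> inv w)" using k by simp
              also have "\<dots> = w" using xw Suc.prems inv_div by simp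
        finally show "w \<in> ?h ` Kset G g X" using kK by (metis image_eqI)
      qed
    qed
  qed
  have "int (wk G X (Suc n) \<one> z) = (\<Sum>w\<in>?A. int (wk G X n \<one> w))" by simp
  also have "\<dots> = (\<Sum>k\<in>Kset G g X. int (wk G X n \<one> (?h k)))"
    using hb by (rule sum.reindex_bij_betw[symmetric])
  also have "\<dots> = (\<Sum>k\<in>Kset G g X. cnt G g (Fpoly G g X ^ n) (?h k))"
    using Suc.IH Suc.prems g by (intro sum.cong refl) simp
  also have "\<dots> = (\<Sum>k\<in>Kset G g X. cnt G g (monom 1 k * Fpoly G g X ^ n) z)"
    using cnt_monom_mult[OF g(1) Suc.prems] by simp
  also have "\<dots> = cnt G g (\<Sum>k\<in>Kset G g X. monom 1 k * Fpoly G g X ^ n) z"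
    by (simp add: cnt_sum)
  also have "(\<Sum>k\<in>Kset G g X. monom 1 k * Fpoly G g X ^ n) = Fpoly G g X ^ Suc n"
    by (simp add: Fpoly_def sum_distrib_right)
  finally show ?case .
qed

lemma wk_mod:
  assumes X: "X \<subseteq> carrier G" and q: "prime q" and z: "z \<in> carrier G"
  shows "\<exists>c. int (wk G X q \<one> z) = int (card {x\<in>X. x [^] q = z}) + int q * c"
proof -
  obtain g where g: "g \<in> carrier G" "g \<noteq> \<one>" using exists_nonid by blast
  let ?F = "Fpoly G g X"
  have "of_nat q dvd (?F ^ q - (\<Sum>k\<in>Kset G g X. monom (1::int) k ^ q))"
    unfolding Fpoly_def by (rule fresh_sum[OF q])
  then obtain R where R: "?F ^ q - (\<Sum>k\<in>Kset G g X. monom (1::int) k ^ q) = of_nat q * R"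
    by (elim dvdE)
  have "?F ^ q = (\<Sum>k\<in>Kset G g X. monom 1 (k * q)) + smult (int q) R"
    using R by (simp add: monom_power of_nat_poly algebra_simps)
  then have "cnt G g (?F ^ q) z = (\<Sum>k\<in>Kset G g X. cnt G g (monom 1 (k * q)) z) + int q * cnt G g R z"
    by (simp add: cnt_add cnt_sum cnt_smult)
  also have "(\<Sum>k\<in>Kset G g X. cnt G g (monom 1 (k * q)) z) = (\<Sum>k\<in>Kset G g X. if (g [^] k) [^] q = z then 1 else 0)"
    using g by (intro sum.cong refl) (simp add: cnt_monom nat_pow_pow)
  also have "\<dots> = (\<Sum>x\<in>X. if x [^] q = z then 1 else 0)"
    using K_bij[OF g X] by (rule sum.reindex_bij_betw)
  also have "\<dots> = int (card {x\<in>X. x [^] q = z})"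
    using fin X by (simp add: sum.If_cases finite_subset Int_def)
  finally have "cnt G g (?F ^ q) z = int (card {x\<in>X. x [^] q = z}) + int q * cnt G g R z" .
  then show ?thesis using wk_cnt[OF g X z, of q] by auto
qed

end


context pgrp
begin

lemma good_pow_prime:
  assumes X: "good G S X" and q: "prime (q::nat)"
  shows "good G S ((\<lambda>x. x [^] q) ` X)"
proof (cases "Coset.order G dvd q")
  case True
  have "(\<lambda>x. x [^] q) ` X \<subseteq> {\<one>}"
  proof
    fix y assume "y \<in> (\<lambda>x. x [^] q) ` X"
    then obtain x where x: "x \<in> X" "y = x [^] q" by blast
    have xc: "x \<in> carrier G" using x X by (auto simp: good_def)
    have "ord x dvd q" using ord_dvd_group_order[OF xc] True by (rule dvd_trans)
    then have "x [^] q = \<one>" using pow_eq_id xc by simp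
    then show "y \<in> {\<one>}" using x by simp
  qed
  then show ?thesis by (rule good_sub_one)
next
  case False
  let ?Y = "(\<lambda>x. x [^] q) ` X"
  define c where "c z = card {x\<in>X. x [^] q = z}" for z
  have Xc: "X \<subseteq> carrier G" using X by (simp add: good_def)
  have finX: "finite X" using Xc fin by (rule finite_subset)
  have c01: "c z \<le> 1" for z
  proof -
    have "card {x\<in>X. x [^] q = z} \<le> Suc 0"
    proof (subst card_le_Suc0_iff_eq)
      show "finite {x\<in>X. x [^] q = z}" using finX by simp
      show "\<forall>a1\<in>{x\<in>X. x [^] q = z}. \<forall>a2\<in>{x\<in>X. x [^] q = z}. a1 = a2"
        using pow_inj[OF False] Xc by blast
    qed
    then show ?thesis by (simp add: c_def)
  qed
  have cY: "(z \<in> ?Y) = (c z = 1)" for z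
  proof -
    have "(z \<in> ?Y) = ({x\<in>X. x [^] q = z} \<noteq> {})" by blast
    also have "\<dots> = (c z \<noteq> 0)" unfolding c_def using finX by simp
    also have "\<dots> = (c z = 1)" using c01[of z] by linarith
    finally show ?thesis .
  qed
  have q2: "int q \<ge> 2" using q prime_ge_2_nat by simp
  show ?thesis
    unfolding good_def
  proof (intro conjI ballI)
    show "?Y \<subseteq> carrier G" using Xc by auto
    fix \<sigma> a b assume \<sigma>: "\<sigma> \<in> cay_aut G S" and a: "a \<in> carrier G" and b: "b \<in> carrier G"
    have sa: "\<sigma> a \<in> carrier G" and sb: "\<sigma> b \<in> carrier G" using aut_closed \<sigma> a b by auto
    have z1: "b \<otimes> inv a \<in> carrier G" and z2: "\<sigma> b \<otimes> inv (\<sigma> a) \<in> carrier G" using a b sa sb by auto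
    have W: "wk G X q \<one> (b \<otimes> inv a) = wk G X q \<one> (\<sigma> b \<otimes> inv (\<sigma> a))"
      using wk_transl[OF a b] wk_transl[OF sa sb] good_wk[OF X \<sigma> a b] by simp
    obtain c1 where c1: "int (wk G X q \<one> (b \<otimes> inv a)) = int (c (b \<otimes> inv a)) + int q * c1"
      using wk_mod[OF Xc q z1] unfolding c_def by blast
    obtain c2 where c2: "int (wk G X q \<one> (\<sigma> b \<otimes> inv (\<sigma> a))) = int (c (\<sigma> b \<otimes> inv (\<sigma> a))) + int q * c2"
      using wk_mod[OF Xc q z2] unfolding c_def by blast
    define d where "d = c2 - c1"
    have dd: "int q * d = int (c (b \<otimes> inv a)) - int (c (\<sigma> b \<otimes> inv (\<sigma> a)))"
      using c1 c2 W unfolding d_def by (simp add: algebra_simps)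
    have "\<bar>int q * d\<bar> \<le> 1"
      using dd c01[of "b \<otimes> inv a"] c01[of "\<sigma> b \<otimes> inv (\<sigma> a)"] by linarith
    then have "d = 0"
    proof (rule contrapos_pp)
      assume "d \<noteq> 0"
      then have "\<bar>d\<bar> \<ge> 1" by linarith
      then have "int q * 1 \<le> int q * \<bar>d\<bar>" using q2 by (intro mult_left_mono) simp_all
      moreover have "\<bar>int q * d\<bar> = int q * \<bar>d\<bar>" by (simp add: abs_mult)
      ultimately show "\<not> \<bar>int q * d\<bar> \<le> 1" using q2 by linarith
    qed
    then have "c (b \<otimes> inv a) = c (\<sigma> b \<otimes> inv (\<sigma> a))" using dd by simp
    then show "(b \<otimes> inv a \<in> ?Y) = (\<sigma> b \<otimes> inv (\<sigma> a) \<in> ?Y)" using cY by simp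
  qed
qed

lemma good_pow:
  assumes X: "good G S X"
  shows "good G S ((\<lambda>x. x [^] (m::nat)) ` X)"
proof (induction m rule: less_induct)
  case (less m)
  have Xc: "X \<subseteq> carrier G" using X by (simp add: good_def)
  show ?case
  proof (cases "m = 0")
    case True
    then have "(\<lambda>x. x [^] m) ` X \<subseteq> {\<one>}" by auto
    then show ?thesis by (rule good_sub_one)
  next
    case m0: False
    show ?thesis
    proof (cases "m = 1")
      case True
      have "(\<lambda>x. x [^] m) ` X = X"
      proof
        show "(\<lambda>x. x [^] m) ` X \<subseteq> X" using Xc True by auto
        show "X \<subseteq> (\<lambda>x. x [^] m) ` X"
        proof
          fix x assume "x \<in> X"
          moreover have "x [^] m = x" using \<open>x \<in> X\<close> Xc True by auto
          ultimately show "x \<in> (\<lambda>x. x [^] m) ` X" by (metis image_eqI)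
        qed
      qed
      then show ?thesis using X by simp
    next
      case False
      obtain q where q: "prime q" "q dvd m" using prime_factor_nat[OF False] by blast
      then obtain m' where m': "m = q * m'" by (elim dvdE)
      have "q \<ge> 2" using q prime_ge_2_nat by blast
      then have "m' < m" using m' m0 by (cases "m' = 0") auto
      then have G1: "good G S ((\<lambda>x. x [^] m') ` X)" by (rule less.IH)
      have "(\<lambda>x. x [^] m) ` X = (\<lambda>y. y [^] q) ` ((\<lambda>x. x [^] m') ` X)"
      proof -
        have "x [^] m = (x [^] m') [^] q" if "x \<in> X" for x
          using that Xc m' by (auto simp: nat_pow_pow mult.commute)
        then show ?thesis by (simp add: image_image cong: image_cong)
      qed
      then show ?thesis using good_pow_prime[OF G1 q(1)] by simp
    qed
  qed
qed

lemma pow_fix: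
  assumes s: "s \<in> carrier G" "s \<noteq> \<one>" "s [^] (n::nat) = s" and t: "t \<in> carrier G"
  shows "t [^] n = t"
proof -
  have n0: "n \<noteq> 0"
  proof
    assume "n = 0"
    then have "s [^] n = \<one>" by simp
    then show False using s by simp
  qed
  then have nS: "n = Suc (n - 1)" by simp
  have "s [^] (n - 1) \<otimes> s = s" using s nS by (metis nat_pow_Suc)
  then have "s [^] (n - 1) \<otimes> s \<otimes> inv s = s \<otimes> inv s" by simp
  moreover have "s [^] (n - 1) \<otimes> s \<otimes> inv s = s [^] (n - 1)" using s by (simp add: m_assoc)
  ultimately have "s [^] (n - 1) = \<one>" using s by simp
  then have "ord s dvd (n - 1)" using pow_eq_id s by simp
  then have "Coset.order G dvd (n - 1)" using ord_p s by simp
  then have "ord t dvd (n - 1)" using ord_dvd_group_order[OF t] by (rule dvd_trans[rotated])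
  then have "t [^] (n - 1) = \<one>" using pow_eq_id t by simp
  then show ?thesis using t nS by (metis l_one nat_pow_Suc)
qed

lemma pow_iso:
  assumes k: "0 < k" "k < Coset.order G"
  shows "(\<lambda>x. x [^] (k::nat)) \<in> iso G G"
proof -
  have nd: "\<not> Coset.order G dvd k" using k by (auto dest: dvd_imp_le)
  have inj: "inj_on (\<lambda>x. x [^] k) (carrier G)"
    using pow_inj[OF nd] by (intro inj_onI) auto
  have sub: "(\<lambda>x. x [^] k) ` carrier G \<subseteq> carrier G" by auto
  have "card ((\<lambda>x. x [^] k) ` carrier G) = card (carrier G)" using inj by (rule card_image)
  then have "(\<lambda>x. x [^] k) ` carrier G = carrier G" using sub fin by (metis card_subset_eq)
  then have bij: "bij_betw (\<lambda>x. x [^] k) (carrier G) (carrier G)" using inj by (simp add: bij_betw_def)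
  have hom: "(\<lambda>x. x [^] k) \<in> hom G G"
    unfolding hom_def
  proof (intro CollectI conjI ballI)
    show "(\<lambda>x. x [^] k) \<in> carrier G \<rightarrow> carrier G" by auto
    fix x y assume "x \<in> carrier G" "y \<in> carrier G"
    then show "(x \<otimes> y) [^] k = x [^] k \<otimes> y [^] k" using comm by (intro pow_mult_distrib) simp_all
  qed
  show ?thesis using hom bij by (simp add: iso_def)
qed

lemma aut0_trivial:
  assumes S: "S \<subseteq> carrier G" and st: "aut_stab_trivial G S" and \<sigma>: "\<sigma> \<in> cay_aut G S"
    and \<sigma>1: "\<sigma> \<one> = \<one>" and y: "y \<in> carrier G"
  shows "\<sigma> y = y"
proof (cases "y = \<one>")
  case True then show ?thesis using \<sigma>1 by simp
next
  case yn: False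
  define x where "x = \<sigma> y"
  have xc: "x \<in> carrier G" using aut_closed[OF \<sigma> y] x_def by simp
  have inj: "inj_on \<sigma> (carrier G)" using aut_bij[OF \<sigma>] by (simp add: bij_betw_def)
  have xn: "x \<noteq> \<one>"
  proof
    assume "x = \<one>"
    then have "\<sigma> y = \<sigma> \<one>" using \<sigma>1 x_def by simp
    then have "y = \<one>" using inj y by (meson inj_onD one_closed)
    then show False using yn by simp
  qed
  obtain k where k: "k < Coset.order G" "x = y [^] k" using gen[OF y yn xc] by blast
  have k0: "k \<noteq> 0"
  proof
    assume "k = 0"
    then have "x = \<one>" using k by simp
    then show False using xn by simp
  qed
  have sub: "(\<lambda>s. s [^] k) ` S \<subseteq> S"
  proof
    fix u assume "u \<in> (\<lambda>s. s [^] k) ` S"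
    then obtain s where s: "s \<in> S" "u = s [^] k" by blast
    have sc: "s \<in> carrier G" using s S by blast
    show "u \<in> S"
    proof (cases "s = \<one>")
      case True then show ?thesis using s by simp
    next
      case sn: False
      obtain j' where j': "y = s [^] (j'::nat)" using gen[OF sc sn y] by blast
      obtain j where j: "s = y [^] (j::nat)" using gen[OF y yn sc] by blast
      have gT: "good G S ((\<lambda>t. t [^] j') ` S)" using good_pow[OF good_S[OF S]] by blast
      have yT: "y \<in> (\<lambda>t. t [^] j') ` S" using j' s by blast
      have "(y \<otimes> inv \<one> \<in> (\<lambda>t. t [^] j') ` S) = (\<sigma> y \<otimes> inv (\<sigma> \<one>) \<in> (\<lambda>t. t [^] j') ` S)"
        using gT \<sigma> y unfolding good_def by blast
      moreover have e1: "y \<otimes> inv \<one> = y" using y by simp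
      moreover have e2: "\<sigma> y \<otimes> inv (\<sigma> \<one>) = x" unfolding \<sigma>1 x_def using aut_closed[OF \<sigma> y] by simp
      ultimately have "x \<in> (\<lambda>t. t [^] j') ` S" using yT by (simp only:)
      then obtain t where t: "t \<in> S" "x = t [^] j'" by blast
      have tc: "t \<in> carrier G" using t S by blast
      have "s [^] (j' * j) = (s [^] j') [^] j" using sc by (simp add: nat_pow_pow)
      also have "\<dots> = y [^] j" by (simp only: j'[symmetric])
      also have "\<dots> = s" by (simp only: j[symmetric])
      finally have "s [^] (j' * j) = s" .
      then have tt: "t [^] (j' * j) = t" using pow_fix sc sn tc by blast
      have ykt: "y [^] k = t [^] j'" using k(2) t(2) by (simp only:)
      have "u = (y [^] j) [^] k" using s(2) j by (simp only:)
      also have "\<dots> = (y [^] k) [^] j" using y by (simp add: nat_pow_pow mult.commute)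
      also have "\<dots> = (t [^] j') [^] j" by (simp only: ykt)
      also have "\<dots> = t" using tc tt by (simp add: nat_pow_pow)
      finally show ?thesis using t by simp
    qed
  qed
  have nd: "\<not> Coset.order G dvd k" using k k0 by (auto dest: dvd_imp_le)
  have "inj_on (\<lambda>s. s [^] k) S"
    using pow_inj[OF nd] S by (intro inj_onI) auto
  then have "card ((\<lambda>s. s [^] k) ` S) = card S" by (rule card_image)
  moreover have "finite S" using S fin by (rule finite_subset)
  ultimately have eqS: "(\<lambda>s. s [^] k) ` S = S" using sub by (metis card_subset_eq)
  have "(\<lambda>s. s [^] k) \<in> iso G G" using pow_iso k k0 by simp
  then have "\<forall>z\<in>carrier G. z [^] k = z" using st eqS unfolding aut_stab_trivial_def by blast
  then have "y [^] k = y" using y by blast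
  then show ?thesis using k x_def by simp
qed

lemma drr:
  assumes S: "S \<subseteq> carrier G" and st: "aut_stab_trivial G S"
  shows "is_DRR G S"
  unfolding is_DRR_def
proof
  show "cay_aut G S \<subseteq> right_regular G"
  proof
    fix \<sigma> assume \<sigma>: "\<sigma> \<in> cay_aut G S"
    define c where "c = \<sigma> \<one>"
    have cc: "c \<in> carrier G" using aut_closed[OF \<sigma>] c_def by simp
    define \<tau> where "\<tau> = (\<lambda>x\<in>carrier G. \<sigma> x \<otimes> inv c)"
    have \<tau>c: "\<tau> x \<in> carrier G" if "x \<in> carrier G" for x
      using that aut_closed[OF \<sigma>] cc by (simp add: \<tau>_def)
    have \<tau>aut: "\<tau> \<in> cay_aut G S"
      unfolding cay_aut_def
    proof (intro CollectI conjI ballI)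
      show "\<tau> \<in> extensional (carrier G)" by (simp add: \<tau>_def)
      have "bij_betw ((\<lambda>x. x \<otimes> inv c) \<circ> \<sigma>) (carrier G) (carrier G)"
        using aut_bij[OF \<sigma>] rmult_bij[of "inv c"] cc by (intro bij_betw_trans) simp_all
      then show "bij_betw \<tau> (carrier G) (carrier G)" by (simp add: \<tau>_def o_def)
      fix x y assume x: "x \<in> carrier G" and y: "y \<in> carrier G"
      have "((x, y) \<in> cay_arcs G S) = ((\<sigma> x, \<sigma> y) \<in> cay_arcs G S)"
        using \<sigma> x y unfolding cay_aut_def by blast
      also have "\<dots> = (\<sigma> y \<otimes> inv (\<sigma> x) \<in> S)"
        using arcs_iff[OF S aut_closed[OF \<sigma> x] aut_closed[OF \<sigma> y]] .
      also have "\<sigma> y \<otimes> inv (\<sigma> x) = \<tau> y \<otimes> inv (\<tau> x)"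
        using div_transl[of "inv c" "\<sigma> x" "\<sigma> y"] x y cc aut_closed[OF \<sigma>] by (simp add: \<tau>_def)
      also have "(\<tau> y \<otimes> inv (\<tau> x) \<in> S) = ((\<tau> x, \<tau> y) \<in> cay_arcs G S)"
        using arcs_iff[OF S \<tau>c[OF x] \<tau>c[OF y]] by simp
      finally show "((x, y) \<in> cay_arcs G S) = ((\<tau> x, \<tau> y) \<in> cay_arcs G S)" .
    qed
    have \<tau>1: "\<tau> \<one> = \<one>" using cc by (simp add: \<tau>_def c_def)
    have fix\<tau>: "\<tau> x = x" if "x \<in> carrier G" for x
      using aut0_trivial[OF S st \<tau>aut \<tau>1 that] .
    have "\<sigma> = (\<lambda>x\<in>carrier G. x \<otimes> c)"
    proof (rule extensionalityI)
      show "\<sigma> \<in> extensional (carrier G)" using \<sigma> by (simp add: cay_aut_def)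
      show "(\<lambda>x\<in>carrier G. x \<otimes> c) \<in> extensional (carrier G)" by simp
      fix x assume x: "x \<in> carrier G"
      have "\<sigma> x \<otimes> inv c = x" using fix\<tau>[OF x] x by (simp add: \<tau>_def)
      then have "\<sigma> x \<otimes> inv c \<otimes> c = x \<otimes> c" by simp
      then show "\<sigma> x = (\<lambda>x\<in>carrier G. x \<otimes> c) x"
        using x cc aut_closed[OF \<sigma> x] by (simp add: m_assoc)
    qed
    then show "\<sigma> \<in> right_regular G" unfolding right_regular_def using cc by blast
  qed
  show "right_regular G \<subseteq> cay_aut G S"
  proof
    fix f assume "f \<in> right_regular G"
    then obtain g where g: "g \<in> carrier G" "f = (\<lambda>x\<in>carrier G. x \<otimes> g)"
      unfolding right_regular_def by blast
    have fc: "f x \<in> carrier G" if "x \<in> carrier G" for x using that g by simp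
    show "f \<in> cay_aut G S"
      unfolding cay_aut_def
    proof (intro CollectI conjI ballI)
      show "f \<in> extensional (carrier G)" using g by simp
      show "bij_betw f (carrier G) (carrier G)" using g rmult_bij by simp
      fix x y assume x: "x \<in> carrier G" and y: "y \<in> carrier G"
      have "((x, y) \<in> cay_arcs G S) = (y \<otimes> inv x \<in> S)" using arcs_iff[OF S x y] .
      also have "y \<otimes> inv x = f y \<otimes> inv (f x)" using div_transl[OF g(1) x y] x y g by simp
      also have "(f y \<otimes> inv (f x) \<in> S) = ((f x, f y) \<in> cay_arcs G S)"
        using arcs_iff[OF S fc[OF x] fc[OF y]] by simp
      finally show "((x, y) \<in> cay_arcs G S) = ((f x, f y) \<in> cay_arcs G S)" .
    qed
  qed
qed

end

theorem proposition4p2: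
  fixes G :: "('a, 'b) monoid_scheme"
  assumes "group G"
    and "prime (card (carrier G))"
  shows "DRR_detecting G \<and> GRR_detecting G"
proof -
  interpret pgrp G
    using assms by (simp add: pgrp_def pgrp_axioms_def Coset.order_def)
  have D: "DRR_detecting G" unfolding DRR_detecting_def using drr by blast
  have R: "GRR_detecting G" unfolding GRR_detecting_def is_GRR_def using drr by blast
  show ?thesis using D R by blast
qed



end
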